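(* Let $k$ be a field, $R$ a commutative $k$-algebra, $M$ an $R$-module, $x$ an $n$-tuple in $R$, $R'=k[x]\subseteq R$, and let $y$ be an $m$-tuple in $R'$ with $\langle y\rangle=\langle x\rangle$ as ideals of $R'$. Let $q\in k[X_1,\ldots,X_n]$ be a polynomial with constant term $q(0)$, and let $z=(y,q(x))$, an $(m+1)$-tuple in $R$. If $b=(0,\lambda)\in\sigma(z,M)$ for some $\lambda\in k$ (with $0\in k^m$), then $0\in\sigma(y,M)$ and $\lambda=q(0)$. Moreover, for this $b$, $\dim_k H_p(z-b,M)=\dim_k H_{p-1}(y,M)+\dim_k H_p(y,M)$ for all $p$, and $i(z-b)=0$ whenever $i(y)<\infty$.
   Context: For a commutative $k$-algebra $R$, an $R$-module $M$ and an $n$-tuple $y=(y_1,\ldots,y_n)$ in $R$, the Koszul complex $\operatorname{Kos}(y,M)$ is $0\leftarrow M\leftarrow M\otimes_k\wedge^1k^n\leftarrow\cdots\leftarrow M\otimes_k\wedge^nk^n\leftarrow 0$ with differential $\partial(m\otimes e_{i_1}\wedge\cdots\wedge e_{i_p})=\sum_{s=1}^p(-1)^{s+1}y_{i_s}m\otimes e_{i_1}\wedge\cdots\wedge\widehat{e_{i_s}}\wedge\cdots\wedge e_{i_p}$; its homology groups are denoted $H_p(y,M)$; $H_{-1}:=0$. For $a\in k^n$, $y-a=(y_1-a_1,\ldots,y_n-a_n)$. The Taylor spectrum $\sigma(y,M)$ is the set of $a\in k^n$ such that $\operatorname{Kos}(y-a,M)$ is not exact. The index is $i(y)=\sum_{p=0}^n(-1)^{p+1}\dim_k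 H_p(y,M)$, defined (written $i(y)<\infty$) when all these dimensions are finite. *)

theory Defs
  imports Main "HOL-Library.Poly_Mapping" "HOL-Library.Extended_Nat" "HOL-Library.Function_Algebras"
begin

text \<open>A commutative k-algebra R is given by a unital ring homomorphism
  phi from the field k into the commutative ring R.\<close>
definition alg_hom :: "('k::field \<Rightarrow> 'r::comm_ring_1) \<Rightarrow> bool" where
  "alg_hom phi \<longleftrightarrow> phi 1 = 1 \<and> (\<forall>a b. phi (a + b) = phi a + phi b \<and> phi (a * b) = phi a * phi b)"

text \<open>Polynomials in k[X_0,...,X_(n-1)]: coefficient maps from monomials (exponent vectors) to k.\<close>
definition mpoly_vars_in :: "nat \<Rightarrow> (((nat \<Rightarrow>\<^sub>0 nat) \<Rightarrow>\<^sub>0 'k::zero)) \<Rightarrow> bool" where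
  "mpoly_vars_in n q \<longleftrightarrow> (\<forall>mo\<in>Poly_Mapping.keys q. Poly_Mapping.keys mo \<subseteq> {..<n})"

definition mpoly_eval :: "('k::field \<Rightarrow> 'r::comm_ring_1) \<Rightarrow> (nat \<Rightarrow> 'r) \<Rightarrow> (((nat \<Rightarrow>\<^sub>0 nat) \<Rightarrow>\<^sub>0 'k)) \<Rightarrow> 'r" where
  "mpoly_eval phi x q = (\<Sum>mo\<in>Poly_Mapping.keys q. phi (Poly_Mapping.lookup q mo) * (\<Prod>i\<in>Poly_Mapping.keys mo. x i ^ Poly_Mapping.lookup mo i))"

definition k_subalg :: "('k::field \<Rightarrow> 'r::comm_ring_1) \<Rightarrow> (nat \<Rightarrow> 'r) \<Rightarrow> nat \<Rightarrow> 'r set" where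
  "k_subalg phi x n = {mpoly_eval phi x q | q. mpoly_vars_in n q}"

definition ideal_gen :: "'r::comm_ring_1 set \<Rightarrow> (nat \<Rightarrow> 'r) \<Rightarrow> nat \<Rightarrow> 'r set" where
  "ideal_gen S g l = {\<Sum>i<l. r i * g i | r. \<forall>i<l. r i \<in> S}"

definition indep_mod :: "('k::field \<Rightarrow> 'v \<Rightarrow> 'v::ab_group_add) \<Rightarrow> 'v set \<Rightarrow> 'v set \<Rightarrow> bool" where
  "indep_mod sc B S \<longleftrightarrow> (\<forall>c. (\<Sum>s\<in>S. sc (c s) s) \<in> B \<longrightarrow> (\<forall>s\<in>S. c s = 0))"

text \<open>dim_k (A / B) as an extended natural (infinity if infinite-dimensional).\<close>
definition qdim :: "('k::field \<Rightarrow> 'v \<Rightarrow> 'v::ab_group_add) \<Rightarrow> 'v set \<Rightarrow> 'v set \<Rightarrow> enat" where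
  "qdim sc A B = Sup {enat (card S) | S. finite S \<and> S \<subseteq> A \<and> indep_mod sc B S}"

text \<open>Chains of degree p: M \<otimes> \<wedge>^p k^n, represented as functions from subsets I of
  {0..<n} with card I = p to M (the coefficient of e_I), zero elsewhere.\<close>
definition kos_chains :: "nat \<Rightarrow> int \<Rightarrow> (nat set \<Rightarrow> 'm::ab_group_add) set" where
  "kos_chains n p = {c. \<forall>I. c I \<noteq> 0 \<longrightarrow> I \<subseteq> {..<n} \<and> int (card I) = p}"

definition kos_diff :: "('r::comm_ring_1 \<Rightarrow> 'm::ab_group_add \<Rightarrow> 'm) \<Rightarrow> (nat \<Rightarrow> 'r) \<Rightarrow> nat
    \<Rightarrow> (nat set \<Rightarrow> 'm) \<Rightarrow> (nat set \<Rightarrow> 'm)" where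
  "kos_diff act y n c = (\<lambda>J. \<Sum>i\<in>{..<n} - J. act ((-1) ^ card {j\<in>J. j < i} * y i) (c (insert i J)))"

definition kos_cycles :: "('r::comm_ring_1 \<Rightarrow> 'm::ab_group_add \<Rightarrow> 'm) \<Rightarrow> (nat \<Rightarrow> 'r) \<Rightarrow> nat \<Rightarrow> int \<Rightarrow> (nat set \<Rightarrow> 'm) set" where
  "kos_cycles act y n p = {c \<in> kos_chains n p. kos_diff act y n c = (\<lambda>_. 0)}"

definition kos_boundaries :: "('r::comm_ring_1 \<Rightarrow> 'm::ab_group_add \<Rightarrow> 'm) \<Rightarrow> (nat \<Rightarrow> 'r) \<Rightarrow> nat \<Rightarrow> int \<Rightarrow> (nat set \<Rightarrow> 'm) set" where
  "kos_boundaries act y n p = kos_diff act y n ` kos_chains n (p + 1)"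

text \<open>dim_k H_p(y, M); for p < 0 (in particular p = -1) this is 0.\<close>
definition kos_hdim :: "('k::field \<Rightarrow> 'r::comm_ring_1) \<Rightarrow> ('r \<Rightarrow> 'm::ab_group_add \<Rightarrow> 'm) \<Rightarrow> (nat \<Rightarrow> 'r) \<Rightarrow> nat \<Rightarrow> int \<Rightarrow> enat" where
  "kos_hdim phi act y n p =
     qdim (\<lambda>a c. (\<lambda>I. act (phi a) (c I))) (kos_cycles act y n p) (kos_boundaries act y n p)"

definition kos_exact :: "('r::comm_ring_1 \<Rightarrow> 'm::ab_group_add \<Rightarrow> 'm) \<Rightarrow> (nat \<Rightarrow> 'r) \<Rightarrow> nat \<Rightarrow> bool" where
  "kos_exact act y n \<longleftrightarrow> (\<forall>p. kos_cycles act y n p \<subseteq> kos_boundaries act y n p)"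

definition tuple_sub :: "('k::field \<Rightarrow> 'r::comm_ring_1) \<Rightarrow> (nat \<Rightarrow> 'r) \<Rightarrow> (nat \<Rightarrow> 'k) \<Rightarrow> nat \<Rightarrow> 'r" where
  "tuple_sub phi y a = (\<lambda>i. y i - phi (a i))"

text \<open>Taylor spectrum; points of k^n are functions nat => k vanishing from index n on.\<close>
definition taylor_spectrum :: "('k::field \<Rightarrow> 'r::comm_ring_1) \<Rightarrow> ('r \<Rightarrow> 'm::ab_group_add \<Rightarrow> 'm) \<Rightarrow> (nat \<Rightarrow> 'r) \<Rightarrow> nat \<Rightarrow> (nat \<Rightarrow> 'k) set" where
  "taylor_spectrum phi act y n = {a. (\<forall>i\<ge>n. a i = 0) \<and> \<not> kos_exact act (tuple_sub phi y a) n}"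

definition kos_index_finite :: "('k::field \<Rightarrow> 'r::comm_ring_1) \<Rightarrow> ('r \<Rightarrow> 'm::ab_group_add \<Rightarrow> 'm) \<Rightarrow> (nat \<Rightarrow> 'r) \<Rightarrow> nat \<Rightarrow> bool" where
  "kos_index_finite phi act y n \<longleftrightarrow> (\<forall>p\<le>n. kos_hdim phi act y n (int p) \<noteq> \<infinity>)"

definition kos_index :: "('k::field \<Rightarrow> 'r::comm_ring_1) \<Rightarrow> ('r \<Rightarrow> 'm::ab_group_add \<Rightarrow> 'm) \<Rightarrow> (nat \<Rightarrow> 'r) \<Rightarrow> nat \<Rightarrow> int" where
  "kos_index phi act y n = (\<Sum>p=0..n. (-1) ^ (p + 1) * int (the_enat (kos_hdim phi act y n (int p))))"

end

theory Submission
  imports Defs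
begin


definition indep_fam :: "('k::field \<Rightarrow> 'v \<Rightarrow> 'v::ab_group_add) \<Rightarrow> 'v set \<Rightarrow> ('i \<Rightarrow> 'v) \<Rightarrow> 'i set \<Rightarrow> bool" where
  "indep_fam sc B f I \<longleftrightarrow> (\<forall>c. (\<Sum>i\<in>I. sc (c i) (f i)) \<in> B \<longrightarrow> (\<forall>i\<in>I. c i = 0))"

lemma enat_Sup_add_le:
  fixes X1 X2 :: "enat set"
  assumes "X1 \<noteq> {}" "X2 \<noteq> {}" "\<And>x y. x \<in> X1 \<Longrightarrow> y \<in> X2 \<Longrightarrow> x + y \<le> s"
  shows "Sup X1 + Sup X2 \<le> s"
proof (cases "s = \<infinity>")
  case True thus ?thesis by simp
next
  case False
  then obtain N where sN: "s = enat N" by (cases s) auto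
  obtain x0 where x0: "x0 \<in> X1" using assms(1) by blast
  obtain y0 where y0: "y0 \<in> X2" using assms(2) by blast
  have b1: "x \<le> enat N" if "x \<in> X1" for x
  proof -
    have "x \<le> x + y0" using le_iff_add by blast
    thus ?thesis using assms(3)[OF that y0] sN by (metis order.trans)
  qed
  have b2: "y \<le> enat N" if "y \<in> X2" for y
  proof -
    have "y \<le> x0 + y" using le_iff_add add.commute by metis
    thus ?thesis using assms(3)[OF x0 that] sN by (metis order.trans)
  qed
  have f1: "finite X1" using b1 finite_enat_bounded by blast
  have f2: "finite X2" using b2 finite_enat_bounded by blast
  have "Sup X1 \<in> X1" using f1 assms(1) unfolding Sup_enat_def by simp
  moreover have "Sup X2 \<in> X2" using f2 assms(2) unfolding Sup_enat_def by simp
  ultimately show ?thesis using assms(3) by blast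
qed

context vector_space
begin

lemma indep_fam_inj:
  assumes "indep_fam scale B f I" "finite I" "0 \<in> B"
  shows "inj_on f I"
proof (rule inj_onI, rule ccontr)
  fix i j assume ij: "i \<in> I" "j \<in> I" "f i = f j" "i \<noteq> j"
  define c where "c t = (if t = i then 1 else if t = j then -1 else (0::'a))" for t
  have "(\<Sum>t\<in>I. c t *s f t) = (\<Sum>t\<in>{i,j}. c t *s f t)"
    using assms(2) ij by (intro sum.mono_neutral_right) (auto simp: c_def)
  also have "\<dots> = 0" using ij by (simp add: c_def)
  finally have "c i = 0" using assms(1,3) ij unfolding indep_fam_def by metis
  thus False by (simp add: c_def)
qed

lemma indep_fam_mod:
  assumes "indep_fam scale B f I" "finite I" "0 \<in> B"
  shows "indep_mod scale B (f ` I)"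
  unfolding indep_mod_def
proof (intro allI impI ballI)
  fix c s assume h: "(\<Sum>s\<in>f ` I. c s *s s) \<in> B" "s \<in> f ` I"
  have inj: "inj_on f I" using indep_fam_inj assms by blast
  have "(\<Sum>i\<in>I. (c \<circ> f) i *s f i) \<in> B"
    using h(1) sum.reindex[OF inj, of "\<lambda>s. c s *s s"] by (simp add: o_def)
  thus "c s = 0" using assms(1) h(2) unfolding indep_fam_def by fastforce
qed

lemma qdim_ge:
  assumes "indep_fam scale B f I" "finite I" "0 \<in> B" "f ` I \<subseteq> A"
  shows "enat (card I) \<le> qdim scale A B"
proof -
  have "card (f ` I) = card I" using indep_fam_inj[OF assms(1-3)] card_image by blast
  moreover have "f ` I \<in> {S. finite S \<and> S \<subseteq> A \<and> indep_mod scale B S}"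
    using indep_fam_mod[OF assms(1-3)] assms(2,4) by auto
  ultimately show ?thesis unfolding qdim_def by (metis (mono_tags, lifting) Sup_upper mem_Collect_eq)
qed

lemma qdim_le:
  assumes "\<And>S. finite S \<Longrightarrow> S \<subseteq> A \<Longrightarrow> indep_mod scale B S \<Longrightarrow> enat (card S) \<le> d"
  shows "qdim scale A B \<le> d"
  unfolding qdim_def using assms by (auto intro!: Sup_least)

lemma indep_mod_fam: "indep_mod scale B S \<Longrightarrow> indep_fam scale B id S"
  unfolding indep_mod_def indep_fam_def by simp

lemma qdim_zero:
  assumes "A \<subseteq> B"
  shows "qdim scale A B = 0"
proof -
  have "enat (card S) \<le> 0" if "finite S" "S \<subseteq> A" "indep_mod scale B S" for S
  proof (cases "S = {}")
    case False
    then obtain s where s: "s \<in> S" by blast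
    define c where "c t = (if t = s then 1 else (0::'a))" for t
    have "(\<Sum>t\<in>S. c t *s t) = (\<Sum>t\<in>{s}. c t *s t)"
      using that s by (intro sum.mono_neutral_right) (auto simp: c_def)
    also have "\<dots> = s" by (simp add: c_def)
    finally have "c s = 0" using that s assms unfolding indep_mod_def by (metis subsetD)
    thus ?thesis by (simp add: c_def)
  qed (simp add: zero_enat_def)
  thus ?thesis using qdim_le by (metis le_zero_eq)
qed

lemma fam_max:
  assumes "subspace B" "indep_fam scale B f U" "finite U" "v \<notin> U"
    "\<not> indep_fam scale B f (insert v U)"
  shows "\<exists>c. f v - (\<Sum>u\<in>U. c u *s f u) \<in> B"
proof -
  obtain c where c: "(\<Sum>i\<in>insert v U. c i *s f i) \<in> B" "\<exists>i\<in>insert v U. c i \<noteq> 0"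
    using assms(5) unfolding indep_fam_def by blast
  have eq: "(\<Sum>i\<in>insert v U. c i *s f i) = c v *s f v + (\<Sum>i\<in>U. c i *s f i)"
    using assms(3,4) by simp
  have cv: "c v \<noteq> 0"
  proof
    assume "c v = 0"
    hence "(\<Sum>i\<in>U. c i *s f i) \<in> B" using c(1) eq by simp
    hence "\<forall>i\<in>U. c i = 0" using assms(2) unfolding indep_fam_def by blast
    thus False using c(2) \<open>c v = 0\<close> by auto
  qed
  have "inverse (c v) *s (\<Sum>i\<in>insert v U. c i *s f i) \<in> B"
    using c(1) assms(1) subspace_scale by blast
  also have "inverse (c v) *s (\<Sum>i\<in>insert v U. c i *s f i)
     = f v - (\<Sum>u\<in>U. (- (inverse (c v) * c u)) *s f u)"
    using cv by (simp add: eq scale_right_distrib scale_sum_right sum_negf)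
  finally show ?thesis by (rule exI[where x="\<lambda>u. - (inverse (c v) * c u)"])
qed

end


context vector_space
begin

lemma qdim_dsum:
  assumes W1: "subspace W1" and W2: "subspace W2"
    and sA1: "subspace A1" and sB1: "subspace B1" and sA2: "subspace A2" and sB2: "subspace B2"
    and sub: "A1 \<subseteq> W1" "B1 \<subseteq> W1" "A2 \<subseteq> W2" "B2 \<subseteq> W2"
    and g1add: "\<And>x y. g1 (x + y) = g1 x + g1 y" and g1sc: "\<And>a x. g1 (a *s x) = a *s g1 x"
    and g2add: "\<And>x y. g2 (x + y) = g2 x + g2 y" and g2sc: "\<And>a x. g2 (a *s x) = a *s g2 x"
    and uniq: "\<And>x y. x \<in> W1 \<Longrightarrow> y \<in> W2 \<Longrightarrow> g1 x + g2 y = 0 \<Longrightarrow> x = 0 \<and> y = 0"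
    and A: "A = {g1 a + g2 b | a b. a \<in> A1 \<and> b \<in> A2}"
    and B: "B = {g1 a + g2 b | a b. a \<in> B1 \<and> b \<in> B2}"
  shows "qdim scale A B = qdim scale A1 B1 + qdim scale A2 B2"
proof -
  interpret G1: additive g1 by standard (rule g1add)
  interpret G2: additive g2 by standard (rule g2add)
  have g1s: "g1 (\<Sum>i\<in>I. c i *s f i) = (\<Sum>i\<in>I. c i *s g1 (f i))" for I c f
    by (simp add: G1.sum g1sc)
  have g2s: "g2 (\<Sum>i\<in>I. c i *s f i) = (\<Sum>i\<in>I. c i *s g2 (f i))" for I c f
    by (simp add: G2.sum g2sc)
  have B0: "0 \<in> B" unfolding B using subspace_0[OF sB1] subspace_0[OF sB2] G1.zero G2.zero
    by (metis (mono_tags, lifting) add_0 mem_Collect_eq)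
  have ge: "qdim scale A1 B1 + qdim scale A2 B2 \<le> qdim scale A B"
    unfolding qdim_def[of scale A1 B1] qdim_def[of scale A2 B2]
  proof (rule enat_Sup_add_le)
    have "enat (card {}) \<in> {enat (card S) |S. finite S \<and> S \<subseteq> A1 \<and> indep_mod (*s) B1 S}"
      by (auto simp: indep_mod_def intro!: exI[of _ "{}"])
    thus "{enat (card S) |S. finite S \<and> S \<subseteq> A1 \<and> indep_mod (*s) B1 S} \<noteq> {}" by blast
    have "enat (card {}) \<in> {enat (card S) |S. finite S \<and> S \<subseteq> A2 \<and> indep_mod (*s) B2 S}"
      by (auto simp: indep_mod_def intro!: exI[of _ "{}"])
    thus "{enat (card S) |S. finite S \<and> S \<subseteq> A2 \<and> indep_mod (*s) B2 S} \<noteq> {}" by blast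
    fix x y
    assume "x \<in> {enat (card S) |S. finite S \<and> S \<subseteq> A1 \<and> indep_mod (*s) B1 S}"
    then obtain S1 where S1: "x = enat (card S1)" "finite S1" "S1 \<subseteq> A1" "indep_mod (*s) B1 S1" by blast
    assume "y \<in> {enat (card S) |S. finite S \<and> S \<subseteq> A2 \<and> indep_mod (*s) B2 S}"
    then obtain S2 where S2: "y = enat (card S2)" "finite S2" "S2 \<subseteq> A2" "indep_mod (*s) B2 S2" by blast
    define I where "I = Inl ` S1 \<union> Inr ` S2"
    define f where "f = case_sum g1 g2"
    have finI: "finite I" using S1 S2 by (simp add: I_def)
    have cardI: "card I = card S1 + card S2" unfolding I_def
      by (subst card_Un_disjoint) (auto simp: S1 S2 card_image)
    have fI: "f ` I \<subseteq> A"
    proof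
      fix v assume "v \<in> f ` I"
      then consider s where "s \<in> S1" "v = g1 s" | t where "t \<in> S2" "v = g2 t"
        unfolding I_def f_def by auto
      thus "v \<in> A"
      proof cases
        case 1 thus ?thesis unfolding A using S1 subspace_0[OF sA2] G2.zero by force
      next
        case 2 thus ?thesis unfolding A using S2 subspace_0[OF sA1] G1.zero by force
      qed
    qed
    have ind: "indep_fam scale B f I" unfolding indep_fam_def
    proof (intro allI impI)
      fix c assume hc: "(\<Sum>i\<in>I. c i *s f i) \<in> B"
      define X1 where "X1 = (\<Sum>s\<in>S1. c (Inl s) *s s)"
      define X2 where "X2 = (\<Sum>s\<in>S2. c (Inr s) *s s)"
      have "(\<Sum>i\<in>I. c i *s f i) = (\<Sum>i\<in>Inl ` S1. c i *s f i) + (\<Sum>i\<in>Inr ` S2. c i *s f i)"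
        unfolding I_def by (rule sum.union_disjoint) (auto simp: S1 S2)
      also have "\<dots> = g1 X1 + g2 X2"
        by (simp add: sum.reindex X1_def X2_def g1s g2s f_def)
      finally obtain b1 b2 where bb: "b1 \<in> B1" "b2 \<in> B2" "g1 X1 + g2 X2 = g1 b1 + g2 b2"
        using hc unfolding B by auto
      have X1A: "X1 \<in> A1" unfolding X1_def using S1 sA1
        by (intro subspace_sum) (auto intro: subspace_scale)
      have X2A: "X2 \<in> A2" unfolding X2_def using S2 sA2
        by (intro subspace_sum) (auto intro: subspace_scale)
      have "g1 (X1 - b1) + g2 (X2 - b2) = 0" using bb(3) by (simp add: G1.diff G2.diff algebra_simps)
      moreover have "X1 - b1 \<in> W1" using X1A bb sub W1 by (intro subspace_diff) auto
      moreover have "X2 - b2 \<in> W2" using X2A bb sub W2 by (intro subspace_diff) auto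
      ultimately have "X1 - b1 = 0 \<and> X2 - b2 = 0" using uniq by blast
      hence "X1 = b1" "X2 = b2" by auto
      hence X1B: "X1 \<in> B1" and X2B: "X2 \<in> B2" using bb by auto
      have c1: "\<forall>s\<in>S1. c (Inl s) = 0"
        using S1(4) X1B unfolding indep_mod_def X1_def by (metis (no_types))
      have c2: "\<forall>s\<in>S2. c (Inr s) = 0"
        using S2(4) X2B unfolding indep_mod_def X2_def by (metis (no_types))
      show "\<forall>i\<in>I. c i = 0" using c1 c2 unfolding I_def by auto
    qed
    have "enat (card I) \<le> qdim scale A B" by (rule qdim_ge[OF ind finI B0 fI])
    thus "x + y \<le> qdim scale A B" using S1 S2 cardI by simp
  qed
  have le: "qdim scale A B \<le> qdim scale A1 B1 + qdim scale A2 B2"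
  proof (rule qdim_le)
    fix S assume S: "finite S" "S \<subseteq> A" "indep_mod scale B S"
    have "\<forall>s\<in>S. \<exists>p. fst p \<in> A1 \<and> snd p \<in> A2 \<and> s = g1 (fst p) + g2 (snd p)"
      using S(2) unfolding A by fastforce
    then obtain P where P: "\<forall>s\<in>S. fst (P s) \<in> A1 \<and> snd (P s) \<in> A2 \<and> s = g1 (fst (P s)) + g2 (snd (P s))"
      by metis
    define a where "a s = fst (P s)" for s
    define b where "b s = snd (P s)" for s
    have ab: "a s \<in> A1" "b s \<in> A2" "s = g1 (a s) + g2 (b s)" if "s \<in> S" for s
      using P that by (auto simp: a_def b_def)
    define Us where "Us = {U. U \<subseteq> S \<and> indep_fam scale B2 b U}"
    have finUs: "finite Us" unfolding Us_def using S(1) by simp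
    have "{} \<in> Us" unfolding Us_def indep_fam_def by simp
    hence "Max (card ` Us) \<in> card ` Us" using finUs by (intro Max_in) auto
    then obtain U where U: "U \<in> Us" "card U = Max (card ` Us)" by auto
    have Umax: "card U' \<le> card U" if "U' \<in> Us" for U'
      using U(2) finUs that by simp
    have US: "U \<subseteq> S" and Uind: "indep_fam scale B2 b U" using U(1) unfolding Us_def by auto
    have finU: "finite U" using US S(1) finite_subset by blast
    have "\<forall>s\<in>S - U. \<exists>c. b s - (\<Sum>u\<in>U. c u *s b u) \<in> B2"
    proof
      fix s assume s: "s \<in> S - U"
      have "card (insert s U) > card U" using s finU by simp
      hence "insert s U \<notin> Us" using Umax by fastforce
      hence "\<not> indep_fam scale B2 b (insert s U)" using US s unfolding Us_def by auto
      thus "\<exists>c. b s - (\<Sum>u\<in>U. c u *s b u) \<in> B2"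
        using fam_max[OF sB2 Uind finU] s by blast
    qed
    then obtain C where C: "\<forall>s\<in>S - U. b s - (\<Sum>u\<in>U. C s u *s b u) \<in> B2" by metis
    define al where "al s = a s - (\<Sum>u\<in>U. C s u *s a u)" for s
    define be where "be s = b s - (\<Sum>u\<in>U. C s u *s b u)" for s
    have alA: "al s \<in> A1" if "s \<in> S" for s
      unfolding al_def using ab US that sA1
      by (intro subspace_diff subspace_sum subspace_scale) auto
    have beB: "be s \<in> B2" if "s \<in> S - U" for s using C that be_def by auto
    have dec: "s - (\<Sum>u\<in>U. C s u *s u) = g1 (al s) + g2 (be s)" if "s \<in> S" for s
    proof -
      have "(\<Sum>u\<in>U. C s u *s u) = (\<Sum>u\<in>U. C s u *s (g1 (a u) + g2 (b u)))"
        using ab US by (intro sum.cong) auto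
      also have "\<dots> = g1 (\<Sum>u\<in>U. C s u *s a u) + g2 (\<Sum>u\<in>U. C s u *s b u)"
        by (simp add: g1s g2s scale_right_distrib sum.distrib)
      finally show ?thesis using ab[OF that] by (simp add: al_def be_def G1.diff G2.diff)
    qed
    have indal: "indep_fam scale B1 al (S - U)" unfolding indep_fam_def
    proof (intro allI impI)
      fix e assume he: "(\<Sum>s\<in>S - U. e s *s al s) \<in> B1"
      have beS: "(\<Sum>s\<in>S - U. e s *s be s) \<in> B2" using beB sB2
        by (intro subspace_sum subspace_scale) auto
      define E where "E t = (if t \<in> U then - (\<Sum>s\<in>S - U. e s * C s t) else e t)" for t
      have "(\<Sum>s\<in>S - U. e s *s (s - (\<Sum>u\<in>U. C s u *s u)))
          = g1 (\<Sum>s\<in>S - U. e s *s al s) + g2 (\<Sum>s\<in>S - U. e s *s be s)"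
        using dec by (simp add: g1s g2s scale_right_distrib sum.distrib)
      hence inB: "(\<Sum>s\<in>S - U. e s *s (s - (\<Sum>u\<in>U. C s u *s u))) \<in> B"
        using he beS unfolding B by blast
      have "(\<Sum>s\<in>S - U. e s *s (s - (\<Sum>u\<in>U. C s u *s u)))
          = (\<Sum>s\<in>S - U. e s *s s) - (\<Sum>s\<in>S - U. \<Sum>u\<in>U. (e s * C s u) *s u)"
        by (simp add: scale_right_diff_distrib scale_sum_right sum_subtractf)
      also have "(\<Sum>s\<in>S - U. \<Sum>u\<in>U. (e s * C s u) *s u) = (\<Sum>u\<in>U. (\<Sum>s\<in>S - U. e s * C s u) *s u)"
        by (subst sum.swap) (simp add: scale_sum_left)
      also have "(\<Sum>s\<in>S - U. e s *s s) - (\<Sum>u\<in>U. (\<Sum>s\<in>S - U. e s * C s u) *s u)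
          = (\<Sum>t\<in>S - U. E t *s t) + (\<Sum>t\<in>U. E t *s t)"
        by (simp add: E_def sum_negf)
      also have "\<dots> = (\<Sum>t\<in>S. E t *s t)"
        using US S(1) by (metis (no_types, lifting) Diff_partition Diff_disjoint add.commute finite_Diff finU sum.union_disjoint)
      finally have "(\<Sum>t\<in>S. E t *s t) \<in> B" using inB by simp
      hence "\<forall>t\<in>S. E t = 0" using S(3) unfolding indep_mod_def by blast
      thus "\<forall>s\<in>S - U. e s = 0" by (auto simp: E_def)
    qed
    have "enat (card (S - U)) \<le> qdim scale A1 B1"
      using qdim_ge[OF indal] S(1) subspace_0[OF sB1] alA by auto
    moreover have "enat (card U) \<le> qdim scale A2 B2"
    proof -
      have "b ` U \<subseteq> A2" using ab US by auto
      thus ?thesis using qdim_ge[OF Uind finU subspace_0[OF sB2]] by blast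
    qed
    moreover have "card S = card (S - U) + card U"
      using US S(1) by (metis card_Diff_subset finU card_mono le_add_diff_inverse2)
    ultimately show "enat (card S) \<le> qdim scale A1 B1 + qdim scale A2 B2"
      by (metis add_mono plus_enat_simps(1))
  qed
  show ?thesis using ge le by simp
qed

end


definition ks :: "nat \<Rightarrow> nat set \<Rightarrow> 'a::comm_ring_1" where
  "ks i J = (-1) ^ card {j\<in>J. j < i}"

definition i1 :: "nat \<Rightarrow> (nat set \<Rightarrow> 'm::zero) \<Rightarrow> nat set \<Rightarrow> 'm" where
  "i1 m a = (\<lambda>J. if m \<in> J then 0 else a J)"
definition i2 :: "nat \<Rightarrow> (nat set \<Rightarrow> 'm::zero) \<Rightarrow> nat set \<Rightarrow> 'm" where
  "i2 m b = (\<lambda>J. if m \<in> J then b (J - {m}) else 0)"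
definition pr2 :: "nat \<Rightarrow> (nat set \<Rightarrow> 'm::zero) \<Rightarrow> nat set \<Rightarrow> 'm" where
  "pr2 m c = (\<lambda>J. if m \<in> J then 0 else c (insert m J))"
definition sg :: "('r::comm_ring_1 \<Rightarrow> 'm \<Rightarrow> 'm) \<Rightarrow> nat \<Rightarrow> (nat set \<Rightarrow> 'm) \<Rightarrow> nat set \<Rightarrow> 'm" where
  "sg act m f = (\<lambda>J. act (ks m J) (f J))"
definition rm :: "('r \<Rightarrow> 'm \<Rightarrow> 'm) \<Rightarrow> 'r \<Rightarrow> (nat set \<Rightarrow> 'm) \<Rightarrow> nat set \<Rightarrow> 'm" where
  "rm act r f = (\<lambda>J. act r (f J))"
definition hj :: "('r::comm_ring_1 \<Rightarrow> 'm::zero \<Rightarrow> 'm) \<Rightarrow> nat \<Rightarrow> 'r \<Rightarrow> (nat set \<Rightarrow> 'm) \<Rightarrow> nat set \<Rightarrow> 'm" where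
  "hj act j \<rho> b = (\<lambda>J. if j \<in> J then act (ks j J * \<rho>) (b (J - {j})) else 0)"
definition hh :: "('r::comm_ring_1 \<Rightarrow> 'm::ab_group_add \<Rightarrow> 'm) \<Rightarrow> nat \<Rightarrow> (nat \<Rightarrow> 'r) \<Rightarrow> (nat set \<Rightarrow> 'm) \<Rightarrow> nat set \<Rightarrow> 'm" where
  "hh act m r b = (\<lambda>J. \<Sum>j<m. hj act j (r j) b J)"

lemma ks_sq: "ks i J * ks i J = (1::'a::comm_ring_1)"
  by (simp add: ks_def flip: power_add mult_2)

lemma ks_insert: "i \<notin> J \<Longrightarrow> ks j (insert i J) = (if i < j then - ks j J else (ks j J :: 'a::comm_ring_1))"
proof -
  assume i: "i \<notin> J"
  have fin: "finite {x\<in>J. x < j}" by (rule finite_subset[of _ "{..<j}"]) auto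
  show ?thesis
  proof (cases "i < j")
    case True
    hence "{x\<in>insert i J. x < j} = insert i {x\<in>J. x < j}" by auto
    thus ?thesis using True i fin by (simp add: ks_def)
  next
    case False
    hence "{x\<in>insert i J. x < j} = {x\<in>J. x < j}" by auto
    thus ?thesis using False by (simp add: ks_def)
  qed
qed

lemma ks_remove: "j \<in> J \<Longrightarrow> ks i (J - {j}) = (if j < i then - ks i J else (ks i J :: 'a::comm_ring_1))"
proof -
  assume j: "j \<in> J"
  have "ks i J = ks i (insert j (J - {j}))" using j by (simp add: insert_absorb)
  also have "\<dots> = (if j < i then - ks i (J - {j}) else (ks i (J - {j}) :: 'a))" by (rule ks_insert) simp
  finally show ?thesis by auto
qed

lemma ks_insert_self: "ks j (insert j J) = ks j J"
proof -
  have "{x\<in>insert j J. x < j} = {x\<in>J. x < j}" by auto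
  thus ?thesis by (simp add: ks_def)
qed

lemma ks_remove_self: "ks j (J - {j}) = ks j J"
proof -
  have "{x\<in>J - {j}. x < j} = {x\<in>J. x < j}" by auto
  thus ?thesis by (simp add: ks_def)
qed

context module
begin

lemma kd: "kos_diff scale y n c J = (\<Sum>i\<in>{..<n} - J. (ks i J * y i) *s c (insert i J))"
  by (simp add: kos_diff_def ks_def)

lemma homotopy_j:
  assumes jn: "j < n"
  shows "kos_diff scale y n (hj scale j \<rho> b) J + hj scale j \<rho> (kos_diff scale y n b) J = (\<rho> * y j) *s b J"
proof (cases "j \<in> J")
  case True
  have e1: "kos_diff scale y n (hj scale j \<rho> b) J
     = (\<Sum>i\<in>{..<n} - J. (ks i J * y i * (ks j (insert i J) * \<rho>)) *s b (insert i (J - {j})))"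
    unfolding kd hj_def using True by (intro sum.cong) (auto simp: insert_Diff_if)
  have split: "{..<n} - (J - {j}) = insert j ({..<n} - J)" using True jn by auto
  have e2: "hj scale j \<rho> (kos_diff scale y n b) J
     = (\<rho> * y j) *s b J + (\<Sum>i\<in>{..<n} - J. (ks j J * \<rho> * (ks i (J - {j}) * y i)) *s b (insert i (J - {j})))"
  proof -
    have "hj scale j \<rho> (kos_diff scale y n b) J
        = (ks j J * \<rho>) *s (\<Sum>i\<in>insert j ({..<n} - J). (ks i (J - {j}) * y i) *s b (insert i (J - {j})))"
      unfolding hj_def kd using True split by simp
    also have "\<dots> = (ks j J * \<rho>) *s ((ks j (J - {j}) * y j) *s b (insert j (J - {j}))
        + (\<Sum>i\<in>{..<n} - J. (ks i (J - {j}) * y i) *s b (insert i (J - {j}))))"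
      using True by (subst sum.insert) auto
    also have "\<dots> = (ks j J * ks j J * (\<rho> * y j)) *s b J
        + (\<Sum>i\<in>{..<n} - J. (ks j J * \<rho> * (ks i (J - {j}) * y i)) *s b (insert i (J - {j})))"
      using True by (simp add: scale_right_distrib scale_sum_right ks_remove_self insert_absorb mult_ac)
    finally show ?thesis by (simp add: ks_sq)
  qed
  have e3: "(ks i J * y i * (ks j (insert i J) * \<rho>)) + (ks j J * \<rho> * (ks i (J - {j}) * y i)) = 0"
    if "i \<in> {..<n} - J" for i
  proof -
    have ij: "i \<noteq> j" "i \<notin> J" using that True by auto
    show ?thesis using ij by (auto simp: ks_insert ks_remove[OF True] algebra_simps)
  qed
  have "kos_diff scale y n (hj scale j \<rho> b) J + hj scale j \<rho> (kos_diff scale y n b) J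
     = (\<rho> * y j) *s b J + (\<Sum>i\<in>{..<n} - J. ((ks i J * y i * (ks j (insert i J) * \<rho>))
          + (ks j J * \<rho> * (ks i (J - {j}) * y i))) *s b (insert i (J - {j})))"
    unfolding e1 e2 by (simp add: scale_left_distrib sum.distrib algebra_simps)
  also have "\<dots> = (\<rho> * y j) *s b J" using e3 by simp
  finally show ?thesis .
next
  case False
  have "kos_diff scale y n (hj scale j \<rho> b) J
      = (\<Sum>i\<in>{..<n} - J. (ks i J * y i) *s (if j \<in> insert i J then (ks j (insert i J) * \<rho>) *s b (insert i J - {j}) else 0))"
    unfolding kd hj_def by simp
  also have "\<dots> = (\<Sum>i\<in>{j}. (ks i J * y i) *s (if j \<in> insert i J then (ks j (insert i J) * \<rho>) *s b (insert i J - {j}) else 0))"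
    using False jn by (intro sum.mono_neutral_right) auto
  also have "\<dots> = (ks j J * ks j J * (\<rho> * y j)) *s b J"
    using False by (simp add: ks_insert_self mult_ac)
  finally show ?thesis using False by (simp add: ks_sq hj_def)
qed

end


context module
begin

lemma kd_add: "kos_diff scale y n (f + g) = kos_diff scale y n f + kos_diff scale y n g"
  by (rule ext) (simp add: kd scale_right_distrib sum.distrib)
lemma kd_zero: "kos_diff scale y n 0 = 0"
  by (rule ext) (simp add: kd)
lemma kd_minus: "kos_diff scale y n (- f) = - kos_diff scale y n f"
  by (rule ext) (simp add: kd sum_negf)
lemma kd_diff: "kos_diff scale y n (f - g) = kos_diff scale y n f - kos_diff scale y n g"
  by (simp only: diff_conv_add_uminus kd_add kd_minus)
lemma kd_rm: "kos_diff scale y n (rm scale r f) = rm scale r (kos_diff scale y n f)"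
proof (rule ext)
  fix J show "kos_diff scale y n (rm scale r f) J = rm scale r (kos_diff scale y n f) J"
    unfolding kd rm_def scale_sum_right by (intro sum.cong refl) (simp add: mult_ac)
qed
lemma kd_sg: "kos_diff scale y m (sg scale m f) = - sg scale m (kos_diff scale y m f)"
proof (rule ext)
  fix J
  have "kos_diff scale y m (sg scale m f) J = (\<Sum>i\<in>{..<m} - J. (- (ks m J * (ks i J * y i))) *s f (insert i J))"
    unfolding kd sg_def by (intro sum.cong) (auto simp: ks_insert mult_ac)
  thus "kos_diff scale y m (sg scale m f) J = (- sg scale m (kos_diff scale y m f)) J"
    by (simp add: sg_def kd scale_sum_right sum_negf)
qed

lemma sg_add: "sg scale m (f + g) = sg scale m f + sg scale m g"
  by (rule ext) (simp add: sg_def scale_right_distrib)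
lemma sg_zero: "sg scale m 0 = 0"
  by (rule ext) (simp add: sg_def)
lemma sg_minus: "sg scale m (- f) = - sg scale m f"
  by (rule ext) (simp add: sg_def)
lemma sg_diff: "sg scale m (f - g) = sg scale m f - sg scale m g"
  by (rule ext) (simp add: sg_def scale_right_diff_distrib)
lemma sg_sg: "sg scale m (sg scale m f) = f"
  by (rule ext) (simp add: sg_def ks_sq)
lemma sg_rm: "sg scale m (rm scale r f) = rm scale r (sg scale m f)"
  by (rule ext) (simp add: sg_def rm_def mult.commute)

lemma rm_add: "rm scale r (f + g) = rm scale r f + rm scale r g"
  by (rule ext) (simp add: rm_def scale_right_distrib)
lemma rm_add_left: "rm scale (a + b) f = rm scale a f + rm scale b f"
  by (rule ext) (simp add: rm_def scale_left_distrib)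
lemma rm_rm: "rm scale a (rm scale b f) = rm scale (a * b) f"
  by (rule ext) (simp add: rm_def)
lemma rm_zero_left: "rm scale 0 f = 0"
  by (rule ext) (simp add: rm_def)
lemma rm_zero: "rm scale r 0 = 0"
  by (rule ext) (simp add: rm_def)
lemma rm_one: "rm scale 1 f = f"
  by (rule ext) (simp add: rm_def)

lemma hj_add: "hj scale j \<rho> (f + g) = hj scale j \<rho> f + hj scale j \<rho> (g :: nat set \<Rightarrow> 'b)"
  by (rule ext) (simp add: hj_def scale_right_distrib)
lemma hj_zero: "hj scale j \<rho> (0 :: nat set \<Rightarrow> 'b) = 0"
  by (rule ext) (simp add: hj_def)
lemma hj_rm: "hj scale j \<rho> (rm scale a f) = rm scale a (hj scale j \<rho> f)"
  by (rule ext) (simp add: hj_def rm_def mult_ac)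
lemma hh_add: "hh scale m r (f + g) = hh scale m r f + hh scale m r (g :: nat set \<Rightarrow> 'b)"
  by (rule ext) (simp add: hh_def hj_add sum.distrib)
lemma hh_zero: "hh scale m r (0 :: nat set \<Rightarrow> 'b) = 0"
  by (rule ext) (simp add: hh_def hj_zero)
lemma hh_rm: "hh scale m r (rm scale a f) = rm scale a (hh scale m r f)"
  by (rule ext) (simp only: hh_def hj_rm, simp add: rm_def scale_sum_right)

lemma i1_add: "i1 m (f + g) = i1 m f + i1 m (g :: nat set \<Rightarrow> 'b)"
  by (rule ext) (simp add: i1_def)
lemma i2_add: "i2 m (f + g) = i2 m f + i2 m (g :: nat set \<Rightarrow> 'b)"
  by (rule ext) (simp add: i2_def)
lemma i1_zero: "i1 m (0 :: nat set \<Rightarrow> 'b) = 0"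
  by (rule ext) (simp add: i1_def)
lemma i2_zero: "i2 m (0 :: nat set \<Rightarrow> 'b) = 0"
  by (rule ext) (simp add: i2_def)
lemma i1_rm: "i1 m (rm scale a f) = rm scale a (i1 m f)"
  by (rule ext) (simp add: i1_def rm_def)
lemma i2_rm: "i2 m (rm scale a f) = rm scale a (i2 m f)"
  by (rule ext) (simp add: i2_def rm_def)

lemma homotopy:
  "kos_diff scale y m (hh scale m r b) + hh scale m r (kos_diff scale y m b) = rm scale (\<Sum>j<m. r j * y j) b"
proof (rule ext)
  fix J
  have "kos_diff scale y m (hh scale m r b) J = (\<Sum>j<m. kos_diff scale y m (hj scale j (r j) b) J)"
    unfolding kd hh_def by (simp add: scale_sum_right) (rule sum.swap)
  moreover have "hh scale m r (kos_diff scale y m b) J = (\<Sum>j<m. hj scale j (r j) (kos_diff scale y m b) J)"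
    by (simp add: hh_def)
  ultimately have "(kos_diff scale y m (hh scale m r b) + hh scale m r (kos_diff scale y m b)) J
     = (\<Sum>j<m. kos_diff scale y m (hj scale j (r j) b) J + hj scale j (r j) (kos_diff scale y m b) J)"
    by (simp add: sum.distrib)
  also have "\<dots> = (\<Sum>j<m. (r j * y j) *s b J)"
    by (intro sum.cong refl homotopy_j) simp
  finally show "(kos_diff scale y m (hh scale m r b) + hh scale m r (kos_diff scale y m b)) J = rm scale (\<Sum>j<m. r j * y j) b J"
    by (simp add: rm_def scale_sum_left)
qed

lemma kdZ_i1:
  assumes "\<And>i. i < m \<Longrightarrow> Z i = y i"
  shows "kos_diff scale Z (Suc m) (i1 m a) = i1 m (kos_diff scale y m a)"
proof (rule ext)
  fix J
  show "kos_diff scale Z (Suc m) (i1 m a) J = i1 m (kos_diff scale y m a) J"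
  proof (cases "m \<in> J")
    case True thus ?thesis by (simp add: kd i1_def)
  next
    case False
    have sp: "{..<Suc m} - J = insert m ({..<m} - J)" using False by auto
    have "kos_diff scale Z (Suc m) (i1 m a) J
        = (\<Sum>i\<in>insert m ({..<m} - J). (ks i J * Z i) *s i1 m a (insert i J))"
      unfolding kd sp ..
    also have "\<dots> = (\<Sum>i\<in>{..<m} - J. (ks i J * Z i) *s i1 m a (insert i J))"
      by (subst sum.insert) (auto simp: i1_def)
    also have "\<dots> = (\<Sum>i\<in>{..<m} - J. (ks i J * y i) *s a (insert i J))"
      using assms False by (intro sum.cong refl) (auto simp: i1_def)
    finally show ?thesis using False by (simp add: i1_def kd)
  qed
qed

lemma kdZ_i2:
  assumes "\<And>i. i < m \<Longrightarrow> Z i = y i"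
  shows "kos_diff scale Z (Suc m) (i2 m b) = i2 m (kos_diff scale y m b) + i1 m (sg scale m (rm scale (Z m) b))"
proof (rule ext)
  fix J
  show "kos_diff scale Z (Suc m) (i2 m b) J = (i2 m (kos_diff scale y m b) + i1 m (sg scale m (rm scale (Z m) b))) J"
  proof (cases "m \<in> J")
    case True
    have sp: "{..<Suc m} - J = {..<m} - (J - {m})" using True by (auto simp: less_Suc_eq)
    have "kos_diff scale Z (Suc m) (i2 m b) J
        = (\<Sum>i\<in>{..<m} - (J - {m}). (ks i J * Z i) *s i2 m b (insert i J))"
      unfolding kd sp ..
    also have "\<dots> = (\<Sum>i\<in>{..<m} - (J - {m}). (ks i (J - {m}) * y i) *s b (insert i (J - {m})))"
      using assms True by (intro sum.cong refl) (auto simp: i2_def ks_remove insert_Diff_if)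
    also have "\<dots> = kos_diff scale y m b (J - {m})" unfolding kd ..
    finally show ?thesis using True by (simp add: i1_def i2_def)
  next
    case False
    have sp: "{..<Suc m} - J = insert m ({..<m} - J)" using False by auto
    have "(\<Sum>i\<in>{..<m} - J. (ks i J * Z i) *s i2 m b (insert i J)) = 0"
      using False by (intro sum.neutral) (auto simp: i2_def)
    thus ?thesis using False unfolding kd sp
      by (simp add: i2_def i1_def sg_def rm_def)
  qed
qed

end


context module
begin


lemma chD: "f \<in> kos_chains n p \<Longrightarrow> f I \<noteq> 0 \<Longrightarrow> I \<subseteq> {..<n} \<and> int (card I) = p"
  by (simp add: kos_chains_def)
lemma ch_zero: "0 \<in> kos_chains n p"
  by (simp add: kos_chains_def)
lemma ch_add: assumes "f \<in> kos_chains n p" "g \<in> kos_chains n p" shows "f + g \<in> kos_chains n p"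
  unfolding kos_chains_def
proof (intro CollectI allI impI)
  fix I assume "(f + g) I \<noteq> 0"
  hence "f I \<noteq> 0 \<or> g I \<noteq> 0" by auto
  thus "I \<subseteq> {..<n} \<and> int (card I) = p" using chD[OF assms(1), of I] chD[OF assms(2), of I] by blast
qed
lemma ch_minus: assumes "f \<in> kos_chains n p" shows "- f \<in> kos_chains n p"
  unfolding kos_chains_def
proof (intro CollectI allI impI)
  fix I assume "(- f) I \<noteq> 0"
  hence "f I \<noteq> 0" by auto
  thus "I \<subseteq> {..<n} \<and> int (card I) = p" using chD[OF assms, of I] by blast
qed
lemma ch_diff: "f \<in> kos_chains n p \<Longrightarrow> g \<in> kos_chains n p \<Longrightarrow> f - g \<in> kos_chains n p"
  unfolding diff_conv_add_uminus by (rule ch_add[OF _ ch_minus])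
lemma ch_rm: assumes "f \<in> kos_chains n p" shows "rm scale r f \<in> kos_chains n p"
  unfolding kos_chains_def
proof (intro CollectI allI impI)
  fix I assume "rm scale r f I \<noteq> 0"
  hence "f I \<noteq> 0" by (cases "f I = 0") (auto simp: rm_def)
  thus "I \<subseteq> {..<n} \<and> int (card I) = p" using chD[OF assms, of I] by blast
qed
lemma ch_sg: assumes "f \<in> kos_chains n p" shows "sg scale m f \<in> kos_chains n p"
  unfolding kos_chains_def
proof (intro CollectI allI impI)
  fix I assume "sg scale m f I \<noteq> 0"
  hence "f I \<noteq> 0" by (cases "f I = 0") (auto simp: sg_def)
  thus "I \<subseteq> {..<n} \<and> int (card I) = p" using chD[OF assms, of I] by blast
qed
lemma ch_sum: "(\<And>j. j \<in> A \<Longrightarrow> F j \<in> kos_chains n p) \<Longrightarrow> (\<lambda>J. \<Sum>j\<in>A. F j J) \<in> kos_chains n p"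
proof -
  assume h: "\<And>j. j \<in> A \<Longrightarrow> F j \<in> kos_chains n p"
  show ?thesis unfolding kos_chains_def
  proof (intro CollectI allI impI)
    fix I assume nz: "(\<Sum>j\<in>A. F j I) \<noteq> 0"
    have "\<exists>j\<in>A. F j I \<noteq> 0"
    proof (rule ccontr)
      assume "\<not> ?thesis"
      hence "(\<Sum>j\<in>A. F j I) = 0" by (intro sum.neutral) auto
      thus False using nz by simp
    qed
    then obtain j where "j \<in> A" "F j I \<noteq> 0" by blast
    thus "I \<subseteq> {..<n} \<and> int (card I) = p" using h[of j] chD[of "F j" n p I] by blast
  qed
qed

lemma kd_chain:
  assumes "c \<in> kos_chains n p"
  shows "kos_diff scale y n c \<in> kos_chains n (p - 1)"
  unfolding kos_chains_def
proof (intro CollectI allI impI)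
  fix J assume nz: "kos_diff scale y n c J \<noteq> 0"
  have "\<exists>i\<in>{..<n} - J. c (insert i J) \<noteq> 0"
  proof (rule ccontr)
    assume "\<not> ?thesis"
    hence "(\<Sum>i\<in>{..<n} - J. (ks i J * y i) *s c (insert i J)) = 0" by (intro sum.neutral) auto
    thus False using nz by (simp add: kd)
  qed
  then obtain i where i: "i \<in> {..<n} - J" "c (insert i J) \<noteq> 0" by blast
  hence "insert i J \<subseteq> {..<n}" "int (card (insert i J)) = p" using chD[OF assms] by auto
  moreover have "finite J" using calculation(1) by (rule finite_subset[THEN finite_insert[THEN iffD1]]) simp
  ultimately show "J \<subseteq> {..<n} \<and> int (card J) = p - 1" using i by auto
qed

lemma hj_chain:
  assumes "j < m" "b \<in> kos_chains m p"
  shows "hj scale j \<rho> b \<in> kos_chains m (p + 1)"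
  unfolding kos_chains_def
proof (intro CollectI allI impI)
  fix J assume "hj scale j \<rho> b J \<noteq> 0"
  hence J: "j \<in> J" "b (J - {j}) \<noteq> 0" by (auto simp: hj_def split: if_splits)
  have s1: "J - {j} \<subseteq> {..<m}" and c1: "int (card (J - {j})) = p" using chD[OF assms(2) J(2)] by auto
  have "finite (J - {j})" using s1 by (rule finite_subset) simp
  hence "finite J" by simp
  hence "card J = Suc (card (J - {j}))" using J(1) by (rule card_Suc_Diff1[symmetric])
  hence "int (card J) = p + 1" using c1 by simp
  moreover have "J \<subseteq> {..<m}" using s1 J(1) assms(1) by blast
  ultimately show "J \<subseteq> {..<m} \<and> int (card J) = p + 1" by simp
qed

lemma hh_chain: "b \<in> kos_chains m p \<Longrightarrow> hh scale m r b \<in> kos_chains m (p + 1)"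
  unfolding hh_def by (rule ch_sum) (auto intro: hj_chain)

lemma i1_chain: assumes "a \<in> kos_chains m p" shows "i1 m a \<in> kos_chains (Suc m) p"
  unfolding kos_chains_def
proof (intro CollectI allI impI)
  fix I assume "i1 m a I \<noteq> 0"
  hence "a I \<noteq> 0" by (auto simp: i1_def split: if_splits)
  thus "I \<subseteq> {..<Suc m} \<and> int (card I) = p" using chD[OF assms, of I] by auto
qed

lemma i2_chain: "b \<in> kos_chains m p \<Longrightarrow> i2 m b \<in> kos_chains (Suc m) (p + 1)"
proof -
  assume b: "b \<in> kos_chains m p"
  show ?thesis unfolding kos_chains_def
  proof (intro CollectI allI impI)
    fix J assume "i2 m b J \<noteq> 0"
    hence J: "m \<in> J" "b (J - {m}) \<noteq> 0" by (auto simp: i2_def split: if_splits)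
    have s1: "J - {m} \<subseteq> {..<m}" and c1: "int (card (J - {m})) = p" using chD[OF b J(2)] by auto
    have "finite (J - {m})" using s1 by (rule finite_subset) simp
    hence "finite J" by simp
    hence "card J = Suc (card (J - {m}))" using J(1) by (rule card_Suc_Diff1[symmetric])
    hence "int (card J) = p + 1" using c1 by simp
    moreover have "J \<subseteq> {..<Suc m}" using s1 J(1) by auto
    ultimately show "J \<subseteq> {..<Suc m} \<and> int (card J) = p + 1" by simp
  qed
qed

lemma i1_chain_id: "a \<in> kos_chains m p \<Longrightarrow> i1 m a = a"
  by (rule ext) (auto simp: i1_def kos_chains_def)

lemma decomp:
  assumes "c \<in> kos_chains (Suc m) p"
  shows "i1 m c \<in> kos_chains m p" "pr2 m c \<in> kos_chains m (p - 1)" "c = i1 m (i1 m c) + i2 m (pr2 m c)"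
proof -
  show "i1 m c \<in> kos_chains m p" using assms
    by (auto simp: kos_chains_def i1_def lessThan_Suc)
  show "pr2 m c \<in> kos_chains m (p - 1)" unfolding kos_chains_def
  proof (intro CollectI allI impI)
    fix J assume "pr2 m c J \<noteq> 0"
    hence J: "m \<notin> J" "c (insert m J) \<noteq> 0" by (auto simp: pr2_def split: if_splits)
    have s1: "insert m J \<subseteq> {..<Suc m}" and c1: "int (card (insert m J)) = p" using chD[OF assms J(2)] by auto
    have "finite (insert m J)" using s1 by (rule finite_subset) simp
    hence "finite J" by simp
    hence "int (card J) = p - 1" using c1 J(1) by simp
    moreover have "J \<subseteq> {..<m}" using s1 J(1) by (auto simp: less_Suc_eq)
    ultimately show "J \<subseteq> {..<m} \<and> int (card J) = p - 1" by simp
  qed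
  show "c = i1 m (i1 m c) + i2 m (pr2 m c)"
    by (rule ext) (auto simp: i1_def i2_def pr2_def insert_absorb)
qed

lemma uniq:
  assumes "a \<in> kos_chains m p" "b \<in> kos_chains m q" "i1 m a + i2 m b = 0"
  shows "a = 0 \<and> b = 0"
proof
  have "a J = 0" for J
    proof (cases "m \<in> J")
      case True thus ?thesis using assms(1) by (auto simp: kos_chains_def)
    next
      case False thus ?thesis using fun_cong[OF assms(3), of J] by (simp add: i1_def i2_def)
    qed
  thus "a = 0" by (simp add: fun_eq_iff)
  have "b J = 0" for J
    proof (cases "m \<in> J")
      case True thus ?thesis using assms(2) by (auto simp: kos_chains_def)
    next
      case False thus ?thesis using fun_cong[OF assms(3), of "insert m J"] by (simp add: i1_def i2_def)
    qed
  thus "b = 0" by (simp add: fun_eq_iff)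
qed

end


context module
begin

lemma cyc_iff: "c \<in> kos_cycles scale y n p \<longleftrightarrow> c \<in> kos_chains n p \<and> kos_diff scale y n c = 0"
  by (simp add: kos_cycles_def zero_fun_def)

lemma G:
  assumes Zy: "\<And>i. i < m \<Longrightarrow> Z i = y i" and Zm: "Z m = u + (\<Sum>j<m. r j * y j)"
  shows "kos_diff scale Z (Suc m) (i1 m (a + sg scale m (hh scale m r b)) + i2 m b)
    = i1 m (kos_diff scale y m a + sg scale m (rm scale u b) + sg scale m (hh scale m r (kos_diff scale y m b)))
      + i2 m (kos_diff scale y m b)"
proof -
  let ?Dy = "kos_diff scale y m"
  let ?X = "a + sg scale m (hh scale m r b)"
  have 1: "kos_diff scale Z (Suc m) (i1 m ?X + i2 m b) = i1 m (?Dy ?X + sg scale m (rm scale (Z m) b)) + i2 m (?Dy b)"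
    by (simp add: kd_add kdZ_i1[OF Zy] kdZ_i2[OF Zy] i1_add add_ac)
  have 2: "?Dy ?X = ?Dy a - sg scale m (?Dy (hh scale m r b))"
    by (simp add: kd_add kd_sg)
  have 3: "sg scale m (rm scale (Z m) b) = sg scale m (rm scale u b) + sg scale m (?Dy (hh scale m r b)) + sg scale m (hh scale m r (?Dy b))"
    by (simp add: Zm rm_add_left sg_add flip: homotopy add.assoc)
  show ?thesis unfolding 1 2 3 by (simp add: algebra_simps)
qed

lemma cycZ:
  assumes Zy: "\<And>i. i < m \<Longrightarrow> Z i = y i" and Zm: "Z m = u + (\<Sum>j<m. r j * y j)"
  shows "c \<in> kos_cycles scale Z (Suc m) p \<longleftrightarrow>
    (\<exists>a b. a \<in> kos_chains m p \<and> b \<in> kos_chains m (p - 1) \<and> kos_diff scale y m b = 0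
       \<and> kos_diff scale y m a + sg scale m (rm scale u b) = 0 \<and> c = i1 m (a + sg scale m (hh scale m r b)) + i2 m b)"
proof
  assume "c \<in> kos_cycles scale Z (Suc m) p"
  hence c: "c \<in> kos_chains (Suc m) p" "kos_diff scale Z (Suc m) c = 0" by (auto simp: cyc_iff)
  define b where "b = pr2 m c"
  define a where "a = i1 m c - sg scale m (hh scale m r b)"
  have b: "b \<in> kos_chains m (p - 1)" using decomp(2)[OF c(1)] b_def by simp
  have hb: "hh scale m r b \<in> kos_chains m p" using hh_chain[OF b] by simp
  have a: "a \<in> kos_chains m p" unfolding a_def using decomp(1)[OF c(1)] hb by (intro ch_diff ch_sg)
  have ceq: "c = i1 m (a + sg scale m (hh scale m r b)) + i2 m b"
    using decomp(3)[OF c(1)] by (simp add: a_def b_def)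
  have "i1 m (kos_diff scale y m a + sg scale m (rm scale u b) + sg scale m (hh scale m r (kos_diff scale y m b)))
      + i2 m (kos_diff scale y m b) = 0"
    using c(2) G[OF Zy Zm, of a b] ceq by simp
  moreover have "kos_diff scale y m a + sg scale m (rm scale u b) + sg scale m (hh scale m r (kos_diff scale y m b)) \<in> kos_chains m (p - 1)"
  proof -
    have "hh scale m r (kos_diff scale y m b) \<in> kos_chains m (p - 1)"
      using hh_chain[OF kd_chain[OF b]] by simp
    thus ?thesis using a b by (intro ch_add ch_sg ch_rm kd_chain)
  qed
  moreover have "kos_diff scale y m b \<in> kos_chains m (p - 1 - 1)" using kd_chain[OF b] .
  ultimately have z: "kos_diff scale y m a + sg scale m (rm scale u b) + sg scale m (hh scale m r (kos_diff scale y m b)) = 0"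
     "kos_diff scale y m b = 0" using uniq by blast+
  hence "kos_diff scale y m a + sg scale m (rm scale u b) = 0" by (simp add: hh_zero sg_zero)
  thus "\<exists>a b. a \<in> kos_chains m p \<and> b \<in> kos_chains m (p - 1) \<and> kos_diff scale y m b = 0
       \<and> kos_diff scale y m a + sg scale m (rm scale u b) = 0 \<and> c = i1 m (a + sg scale m (hh scale m r b)) + i2 m b"
    using a b z(2) ceq by blast
next
  assume "\<exists>a b. a \<in> kos_chains m p \<and> b \<in> kos_chains m (p - 1) \<and> kos_diff scale y m b = 0
       \<and> kos_diff scale y m a + sg scale m (rm scale u b) = 0 \<and> c = i1 m (a + sg scale m (hh scale m r b)) + i2 m b"
  then obtain a b where ab: "a \<in> kos_chains m p" "b \<in> kos_chains m (p - 1)" "kos_diff scale y m b = 0"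
       "kos_diff scale y m a + sg scale m (rm scale u b) = 0" "c = i1 m (a + sg scale m (hh scale m r b)) + i2 m b"
    by blast
  have hb: "hh scale m r b \<in> kos_chains m p" using hh_chain[OF ab(2)] by simp
  have "c \<in> kos_chains (Suc m) p"
    unfolding ab(5) using i1_chain[OF ch_add[OF ab(1) ch_sg[OF hb]]] i2_chain[OF ab(2)]
    by (intro ch_add) simp_all
  moreover have "kos_diff scale Z (Suc m) c = 0"
    unfolding ab(5) using ab(3,4) G[OF Zy Zm, of a b] by (simp add: hh_zero sg_zero i1_zero i2_zero kd_zero)
  ultimately show "c \<in> kos_cycles scale Z (Suc m) p" by (simp add: cyc_iff)
qed

lemma bdZ:
  assumes Zy: "\<And>i. i < m \<Longrightarrow> Z i = y i" and Zm: "Z m = u + (\<Sum>j<m. r j * y j)"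
  shows "x \<in> kos_boundaries scale Z (Suc m) p \<longleftrightarrow>
    (\<exists>a b. a \<in> kos_chains m (p + 1) \<and> b \<in> kos_chains m p \<and>
       x = i1 m (kos_diff scale y m a + sg scale m (rm scale u b) + sg scale m (hh scale m r (kos_diff scale y m b)))
      + i2 m (kos_diff scale y m b))"
proof
  assume "x \<in> kos_boundaries scale Z (Suc m) p"
  then obtain c where c: "c \<in> kos_chains (Suc m) (p + 1)" "x = kos_diff scale Z (Suc m) c"
    unfolding kos_boundaries_def by blast
  define b where "b = pr2 m c"
  define a where "a = i1 m c - sg scale m (hh scale m r b)"
  have b: "b \<in> kos_chains m p" using decomp(2)[OF c(1)] b_def by simp
  have hb: "hh scale m r b \<in> kos_chains m (p + 1)" using hh_chain[OF b] by simp
  have a: "a \<in> kos_chains m (p + 1)" unfolding a_def using decomp(1)[OF c(1)] hb by (intro ch_diff ch_sg)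
  have ceq: "c = i1 m (a + sg scale m (hh scale m r b)) + i2 m b"
    using decomp(3)[OF c(1)] by (simp add: a_def b_def)
  show "\<exists>a b. a \<in> kos_chains m (p + 1) \<and> b \<in> kos_chains m p \<and>
       x = i1 m (kos_diff scale y m a + sg scale m (rm scale u b) + sg scale m (hh scale m r (kos_diff scale y m b)))
      + i2 m (kos_diff scale y m b)"
    using a b c(2) ceq G[OF Zy Zm, of a b] by metis
next
  assume "\<exists>a b. a \<in> kos_chains m (p + 1) \<and> b \<in> kos_chains m p \<and>
       x = i1 m (kos_diff scale y m a + sg scale m (rm scale u b) + sg scale m (hh scale m r (kos_diff scale y m b)))
      + i2 m (kos_diff scale y m b)"
  then obtain a b where ab: "a \<in> kos_chains m (p + 1)" "b \<in> kos_chains m p"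
    "x = i1 m (kos_diff scale y m a + sg scale m (rm scale u b) + sg scale m (hh scale m r (kos_diff scale y m b)))
      + i2 m (kos_diff scale y m b)" by blast
  define c where "c = i1 m (a + sg scale m (hh scale m r b)) + i2 m b"
  have hb: "hh scale m r b \<in> kos_chains m (p + 1)" using hh_chain[OF ab(2)] by simp
  have "c \<in> kos_chains (Suc m) (p + 1)"
    unfolding c_def using i1_chain[OF ch_add[OF ab(1) ch_sg[OF hb]]] i2_chain[OF ab(2)]
    by (intro ch_add) simp_all
  moreover have "x = kos_diff scale Z (Suc m) c" unfolding c_def ab(3) using G[OF Zy Zm, of a b] by simp
  ultimately show "x \<in> kos_boundaries scale Z (Suc m) p" unfolding kos_boundaries_def by blast
qed

end


lemma alg_hom_0: "alg_hom phi \<Longrightarrow> phi 0 = 0"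
  unfolding alg_hom_def by (metis add_cancel_right_right add_0)

context module
begin

lemma hdim_rm: "kos_hdim phi scale y n p = qdim (\<lambda>a. rm scale (phi a)) (kos_cycles scale y n p) (kos_boundaries scale y n p)"
  by (simp add: kos_hdim_def rm_def[abs_def])

lemma vs: "alg_hom phi \<Longrightarrow> vector_space (\<lambda>a (f :: nat set \<Rightarrow> 'b). rm scale (phi a) f)"
  unfolding alg_hom_def
  by unfold_locales (simp_all add: rm_add rm_add_left rm_rm rm_one)

lemma modl: "alg_hom phi \<Longrightarrow> module (\<lambda>a (f :: nat set \<Rightarrow> 'b). rm scale (phi a) f)"
  unfolding alg_hom_def
  by unfold_locales (simp_all add: rm_add rm_add_left rm_rm rm_one)

lemma sub_ch: assumes "alg_hom phi" shows "module.subspace (\<lambda>a (f :: nat set \<Rightarrow> 'b). rm scale (phi a) f) (kos_chains n p)"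
  unfolding module.subspace_def[OF modl[OF assms]] by (blast intro: ch_zero ch_add ch_rm)

lemma sub_cyc: "alg_hom phi \<Longrightarrow> module.subspace (\<lambda>a (f :: nat set \<Rightarrow> 'b). rm scale (phi a) f) (kos_cycles scale y n p)"
  by (simp add: module.subspace_def[OF modl] cyc_iff ch_zero ch_add ch_rm kd_zero kd_add kd_rm rm_zero)

lemma sub_bd: assumes "alg_hom phi"
  shows "module.subspace (\<lambda>a (f :: nat set \<Rightarrow> 'b). rm scale (phi a) f) (kos_boundaries scale y n p)"
proof -
  have M: "module (\<lambda>a (f :: nat set \<Rightarrow> 'b). rm scale (phi a) f)" using modl[OF assms] .
  show ?thesis unfolding module.subspace_def[OF M] kos_boundaries_def
  proof (intro conjI ballI allI)
    show "0 \<in> kos_diff scale y n ` kos_chains n (p + 1)"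
      by (rule image_eqI[where x=0]) (simp_all add: kd_zero ch_zero)
    fix a b assume "a \<in> kos_diff scale y n ` kos_chains n (p + 1)" "b \<in> kos_diff scale y n ` kos_chains n (p + 1)"
    then obtain a' b' where "a' \<in> kos_chains n (p + 1)" "b' \<in> kos_chains n (p + 1)"
      "a = kos_diff scale y n a'" "b = kos_diff scale y n b'" by blast
    thus "a + b \<in> kos_diff scale y n ` kos_chains n (p + 1)"
      by (intro image_eqI[where x="a' + b'"]) (simp_all add: kd_add ch_add)
  next
    fix c a assume "a \<in> kos_diff scale y n ` kos_chains n (p + 1)"
    then obtain a' where "a' \<in> kos_chains n (p + 1)" "a = kos_diff scale y n a'" by blast
    thus "rm scale (phi c) a \<in> kos_diff scale y n ` kos_chains n (p + 1)"
      by (intro image_eqI[where x="rm scale (phi c) a'"]) (simp_all add: kd_rm ch_rm)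
  qed
qed

lemma hdim_split:
  assumes ah: "alg_hom phi"
    and Zy: "\<And>i. i < m \<Longrightarrow> Z i = y i" and Zm: "Z m = 0 + (\<Sum>j<m. r j * y j)"
  shows "kos_hdim phi scale Z (Suc m) p = kos_hdim phi scale y m p + kos_hdim phi scale y m (p - 1)"
proof -
  let ?sc = "\<lambda>a (f :: nat set \<Rightarrow> 'b). rm scale (phi a) f"
  let ?g1 = "i1 m :: (nat set \<Rightarrow> 'b) \<Rightarrow> _"
  let ?g2 = "\<lambda>b. i1 m (sg scale m (hh scale m r b)) + i2 m b"
  have bd_sub: "kos_boundaries scale y m q \<subseteq> kos_chains m q" for q
    unfolding kos_boundaries_def using kd_chain by fastforce
  have cy_sub: "kos_cycles scale y m q \<subseteq> kos_chains m q" for q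
    by (auto simp: cyc_iff)
  have A: "kos_cycles scale Z (Suc m) p = {?g1 a + ?g2 b | a b. a \<in> kos_cycles scale y m p \<and> b \<in> kos_cycles scale y m (p - 1)}"
  proof (rule set_eqI)
    fix c
    show "c \<in> kos_cycles scale Z (Suc m) p \<longleftrightarrow> c \<in> {?g1 a + ?g2 b | a b. a \<in> kos_cycles scale y m p \<and> b \<in> kos_cycles scale y m (p - 1)}"
    proof
      assume "c \<in> kos_cycles scale Z (Suc m) p"
      then obtain a b where ab: "a \<in> kos_chains m p" "b \<in> kos_chains m (p - 1)" "kos_diff scale y m b = 0"
       "kos_diff scale y m a + sg scale m (rm scale 0 b) = 0" "c = i1 m (a + sg scale m (hh scale m r b)) + i2 m b"
        using cycZ[OF Zy Zm, of c p] by blast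
      have "a \<in> kos_cycles scale y m p" using ab(1,4) by (simp add: cyc_iff rm_zero_left sg_zero)
      moreover have "b \<in> kos_cycles scale y m (p - 1)" using ab(2,3) by (simp add: cyc_iff)
      moreover have "c = ?g1 a + ?g2 b" using ab(5) by (simp add: i1_add add.assoc)
      ultimately show "c \<in> {?g1 a + ?g2 b | a b. a \<in> kos_cycles scale y m p \<and> b \<in> kos_cycles scale y m (p - 1)}"
        by blast
    next
      assume "c \<in> {?g1 a + ?g2 b | a b. a \<in> kos_cycles scale y m p \<and> b \<in> kos_cycles scale y m (p - 1)}"
      then obtain a b where ab: "a \<in> kos_cycles scale y m p" "b \<in> kos_cycles scale y m (p - 1)" "c = ?g1 a + ?g2 b"
        by blast
      have "a \<in> kos_chains m p \<and> b \<in> kos_chains m (p - 1) \<and> kos_diff scale y m b = 0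
       \<and> kos_diff scale y m a + sg scale m (rm scale 0 b) = 0 \<and> c = i1 m (a + sg scale m (hh scale m r b)) + i2 m b"
        using ab by (simp add: cyc_iff rm_zero_left sg_zero i1_add add.assoc)
      thus "c \<in> kos_cycles scale Z (Suc m) p" using cycZ[OF Zy Zm, of c p] by blast
    qed
  qed
  have B: "kos_boundaries scale Z (Suc m) p = {?g1 a + ?g2 b | a b. a \<in> kos_boundaries scale y m p \<and> b \<in> kos_boundaries scale y m (p - 1)}"
  proof (rule set_eqI)
    fix x
    show "x \<in> kos_boundaries scale Z (Suc m) p \<longleftrightarrow> x \<in> {?g1 a + ?g2 b | a b. a \<in> kos_boundaries scale y m p \<and> b \<in> kos_boundaries scale y m (p - 1)}"
    proof
      assume "x \<in> kos_boundaries scale Z (Suc m) p"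
      then obtain a b where ab: "a \<in> kos_chains m (p + 1)" "b \<in> kos_chains m p"
       "x = i1 m (kos_diff scale y m a + sg scale m (rm scale 0 b) + sg scale m (hh scale m r (kos_diff scale y m b)))
      + i2 m (kos_diff scale y m b)"
        using bdZ[OF Zy Zm, of x p] by blast
      have "kos_diff scale y m a \<in> kos_boundaries scale y m p" using ab(1) by (simp add: kos_boundaries_def)
      moreover have "kos_diff scale y m b \<in> kos_boundaries scale y m (p - 1)" using ab(2) by (simp add: kos_boundaries_def)
      moreover have "x = ?g1 (kos_diff scale y m a) + ?g2 (kos_diff scale y m b)"
        using ab(3) by (simp add: i1_add add.assoc rm_zero_left sg_zero)
      ultimately show "x \<in> {?g1 a + ?g2 b | a b. a \<in> kos_boundaries scale y m p \<and> b \<in> kos_boundaries scale y m (p - 1)}"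
        by blast
    next
      assume "x \<in> {?g1 a + ?g2 b | a b. a \<in> kos_boundaries scale y m p \<and> b \<in> kos_boundaries scale y m (p - 1)}"
      then obtain a b where ab: "a \<in> kos_chains m (p + 1)" "b \<in> kos_chains m p"
         "x = ?g1 (kos_diff scale y m a) + ?g2 (kos_diff scale y m b)"
        unfolding kos_boundaries_def by auto
      have "x = i1 m (kos_diff scale y m a + sg scale m (rm scale 0 b) + sg scale m (hh scale m r (kos_diff scale y m b)))
      + i2 m (kos_diff scale y m b)"
        using ab(3) by (simp add: i1_add add.assoc rm_zero_left sg_zero)
      thus "x \<in> kos_boundaries scale Z (Suc m) p" using bdZ[OF Zy Zm, of x p] ab(1,2) by blast
    qed
  qed
  have "qdim ?sc (kos_cycles scale Z (Suc m) p) (kos_boundaries scale Z (Suc m) p)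
     = qdim ?sc (kos_cycles scale y m p) (kos_boundaries scale y m p)
       + qdim ?sc (kos_cycles scale y m (p - 1)) (kos_boundaries scale y m (p - 1))"
  proof (rule vector_space.qdim_dsum[OF vs[OF ah] sub_ch[OF ah] sub_ch[OF ah] sub_cyc[OF ah] sub_bd[OF ah]
        sub_cyc[OF ah] sub_bd[OF ah] cy_sub bd_sub cy_sub bd_sub _ _ _ _ _ A B])
    show "?g1 (x + y) = ?g1 x + ?g1 y" for x y by (rule i1_add)
    show "?g1 (rm scale (phi a) x) = rm scale (phi a) (?g1 x)" for a x by (rule i1_rm)
    show "?g2 (x + y) = ?g2 x + ?g2 y" for x y by (simp add: i1_add i2_add hh_add sg_add add_ac)
    show "?g2 (rm scale (phi a) x) = rm scale (phi a) (?g2 x)" for a x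
      by (simp add: i1_rm i2_rm hh_rm sg_rm rm_add)
    fix x yy assume x: "x \<in> kos_chains m p" and yy: "yy \<in> kos_chains m (p - 1)" and e: "?g1 x + ?g2 yy = 0"
    have "i1 m (x + sg scale m (hh scale m r yy)) + i2 m yy = 0" using e by (simp add: i1_add add.assoc)
    moreover have "x + sg scale m (hh scale m r yy) \<in> kos_chains m p"
      using hh_chain[OF yy] x by (intro ch_add ch_sg) simp_all
    ultimately have "x + sg scale m (hh scale m r yy) = 0 \<and> yy = 0" using uniq yy by blast
    hence "yy = 0" "x + sg scale m (hh scale m r yy) = 0" by auto
    thus "x = 0 \<and> yy = 0" by (simp add: hh_zero sg_zero)
  qed
  thus ?thesis by (simp add: hdim_rm)
qed

end


context module
begin

lemma exact_transfer:
  assumes Zy: "\<And>i. i < m \<Longrightarrow> Z i = y i" and Zm: "Z m = 0 + (\<Sum>j<m. r j * y j)"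
    and ex: "kos_exact scale y m"
  shows "kos_exact scale Z (Suc m)"
  unfolding kos_exact_def
proof (intro allI subsetI)
  fix p c assume "c \<in> kos_cycles scale Z (Suc m) p"
  then obtain a b where ab: "a \<in> kos_chains m p" "b \<in> kos_chains m (p - 1)" "kos_diff scale y m b = 0"
       "kos_diff scale y m a + sg scale m (rm scale 0 b) = 0" "c = i1 m (a + sg scale m (hh scale m r b)) + i2 m b"
    using cycZ[OF Zy Zm, of c p] by blast
  have "a \<in> kos_cycles scale y m p" using ab(1,4) by (simp add: cyc_iff rm_zero_left sg_zero)
  hence "a \<in> kos_boundaries scale y m p" using ex unfolding kos_exact_def by blast
  then obtain a' where a': "a' \<in> kos_chains m (p + 1)" "a = kos_diff scale y m a'"
    unfolding kos_boundaries_def by blast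
  have "b \<in> kos_cycles scale y m (p - 1)" using ab(2,3) by (simp add: cyc_iff)
  hence "b \<in> kos_boundaries scale y m (p - 1)" using ex unfolding kos_exact_def by blast
  then obtain b' where b': "b' \<in> kos_chains m p" "b = kos_diff scale y m b'"
    unfolding kos_boundaries_def by auto
  have "c = i1 m (kos_diff scale y m a' + sg scale m (rm scale 0 b') + sg scale m (hh scale m r (kos_diff scale y m b')))
      + i2 m (kos_diff scale y m b')"
    using ab(5) a'(2) b'(2) by (simp add: rm_zero_left sg_zero)
  thus "c \<in> kos_boundaries scale Z (Suc m) p" using bdZ[OF Zy Zm, of c p] a'(1) b'(1) by blast
qed

lemma exact_unit:
  assumes Zy: "\<And>i. i < m \<Longrightarrow> Z i = y i" and Zm: "Z m = u + (\<Sum>j<m. r j * y j)"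
    and uv: "u * v = 1"
  shows "kos_exact scale Z (Suc m)"
  unfolding kos_exact_def
proof (intro allI subsetI)
  fix p c assume "c \<in> kos_cycles scale Z (Suc m) p"
  then obtain a b where ab: "a \<in> kos_chains m p" "b \<in> kos_chains m (p - 1)" "kos_diff scale y m b = 0"
       "kos_diff scale y m a + sg scale m (rm scale u b) = 0" "c = i1 m (a + sg scale m (hh scale m r b)) + i2 m b"
    using cycZ[OF Zy Zm, of c p] by blast
  define b' where "b' = rm scale v (sg scale m a)"
  have b'c: "b' \<in> kos_chains m p" unfolding b'_def using ab(1) by (intro ch_rm ch_sg)
  have da: "kos_diff scale y m a = - sg scale m (rm scale u b)" using ab(4) by (simp add: eq_neg_iff_add_eq_0)
  have db': "kos_diff scale y m b' = b"
    unfolding b'_def kd_rm kd_sg da by (simp add: sg_minus sg_sg rm_rm mult.commute uv rm_one)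
  have sb': "sg scale m (rm scale u b') = a"
    unfolding b'_def by (simp add: rm_rm uv sg_rm[symmetric] sg_sg rm_one)
  have "c = i1 m (kos_diff scale y m 0 + sg scale m (rm scale u b') + sg scale m (hh scale m r (kos_diff scale y m b')))
      + i2 m (kos_diff scale y m b')"
    using ab(5) by (simp add: db' sb' kd_zero)
  thus "c \<in> kos_boundaries scale Z (Suc m) p" using bdZ[OF Zy Zm, of c p] b'c ch_zero by blast
qed

end


lemma sub0: "0 \<in> k_subalg phi x n"
proof -
  have "mpoly_eval phi x 0 = 0" by (simp add: mpoly_eval_def)
  moreover have "mpoly_vars_in n 0" by (simp add: mpoly_vars_in_def)
  ultimately show ?thesis unfolding k_subalg_def by (metis (mono_tags, lifting) mem_Collect_eq)
qed

lemma sub1: assumes "alg_hom phi" shows "1 \<in> k_subalg phi x n"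
proof -
  have "mpoly_eval phi x (Poly_Mapping.single 0 1) = 1"
    using assms by (simp add: mpoly_eval_def alg_hom_def)
  moreover have "mpoly_vars_in n (Poly_Mapping.single 0 1)" by (simp add: mpoly_vars_in_def)
  ultimately show ?thesis unfolding k_subalg_def by (metis (mono_tags, lifting) mem_Collect_eq)
qed

lemma poly_part:
  fixes phi :: "'k::field \<Rightarrow> 'r::comm_ring_1"
  assumes ah: "alg_hom phi"
    and id: "ideal_gen (k_subalg phi x n) y m = ideal_gen (k_subalg phi x n) x n"
    and vq: "mpoly_vars_in n q"
  shows "\<exists>r. mpoly_eval phi x q - phi (Poly_Mapping.lookup q 0) = (\<Sum>j<m. r j * y j)"
proof -
  define Y where "Y = {v. \<exists>r. v = (\<Sum>j<m. r j * y j)}"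
  have Y0: "0 \<in> Y" unfolding Y_def by (rule CollectI, rule exI[of _ "\<lambda>_. 0"]) simp
  have Yadd: "a + b \<in> Y" if ha: "a \<in> Y" "b \<in> Y" for a b
  proof -
    obtain r s where "a = (\<Sum>j<m. r j * y j)" "b = (\<Sum>j<m. s j * y j)" using ha unfolding Y_def by blast
    hence "a + b = (\<Sum>j<m. (r j + s j) * y j)" by (simp add: sum.distrib algebra_simps)
    thus ?thesis unfolding Y_def by (intro CollectI exI[of _ "\<lambda>j. r j + s j"])
  qed
  have Ymul: "c * a \<in> Y" if ha: "a \<in> Y" for a c
  proof -
    obtain r where "a = (\<Sum>j<m. r j * y j)" using ha unfolding Y_def by blast
    hence "c * a = (\<Sum>j<m. (c * r j) * y j)" by (simp add: sum_distrib_left mult.assoc)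
    thus ?thesis unfolding Y_def by (intro CollectI exI[of _ "\<lambda>j. c * r j"])
  qed
  have Ysum: "sum f A \<in> Y" if "\<And>a. a \<in> A \<Longrightarrow> f a \<in> Y" for f and A :: "'z set"
    using that
  proof (induction A rule: infinite_finite_induct)
    case (infinite A) thus ?case using Y0 by simp
  next
    case empty thus ?case using Y0 by simp
  next
    case (insert a A) thus ?case using Yadd by simp
  qed
  have Yx: "x i \<in> Y" if "i < n" for i
  proof -
    have "x i = (\<Sum>j<n. (if j = i then x j else 0))" using that by simp
    also have "\<dots> = (\<Sum>j<n. (if j = i then 1 else 0) * x j)" by (rule sum.cong) auto
    finally have "x i = (\<Sum>j<n. (if j = i then 1 else 0) * x j)" .
    moreover have "\<forall>j<n. (if j = i then 1 else 0) \<in> k_subalg phi x n" using sub0[of phi x n] sub1[OF ah, of x n] by simp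
    ultimately have "x i \<in> ideal_gen (k_subalg phi x n) x n" unfolding ideal_gen_def
      by (intro CollectI exI[of _ "\<lambda>j. if j = i then 1 else 0"]) simp
    hence "x i \<in> ideal_gen (k_subalg phi x n) y m" using id by simp
    thus ?thesis unfolding ideal_gen_def Y_def by blast
  qed
  define T where "T mo = phi (Poly_Mapping.lookup q mo) * (\<Prod>i\<in>Poly_Mapping.keys mo. x i ^ Poly_Mapping.lookup mo i)" for mo
  have TY: "T mo \<in> Y" if hm: "mo \<in> Poly_Mapping.keys q" "mo \<noteq> 0" for mo
  proof -
    obtain i0 where i0: "i0 \<in> Poly_Mapping.keys mo" using hm(2) keys_eq_empty by blast
    have i0n: "i0 < n" using vq hm(1) i0 unfolding mpoly_vars_in_def by blast
    have e: "Poly_Mapping.lookup mo i0 \<noteq> 0" using i0 in_keys_iff by metis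
    have "(\<Prod>i\<in>Poly_Mapping.keys mo. x i ^ Poly_Mapping.lookup mo i)
        = x i0 ^ Poly_Mapping.lookup mo i0 * (\<Prod>i\<in>Poly_Mapping.keys mo - {i0}. x i ^ Poly_Mapping.lookup mo i)"
      using i0 by (simp add: prod.remove)
    also have "x i0 ^ Poly_Mapping.lookup mo i0 = x i0 ^ (Poly_Mapping.lookup mo i0 - 1) * x i0"
      using e by (metis power_minus_mult neq0_conv)
    finally have "T mo = (phi (Poly_Mapping.lookup q mo) * x i0 ^ (Poly_Mapping.lookup mo i0 - 1)
        * (\<Prod>i\<in>Poly_Mapping.keys mo - {i0}. x i ^ Poly_Mapping.lookup mo i)) * x i0"
      unfolding T_def by (simp add: mult_ac)
    thus ?thesis using Ymul Yx[OF i0n] by simp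
  qed
  have phi0: "phi 0 = 0" using alg_hom_0[OF ah] .
  have "mpoly_eval phi x q = (\<Sum>mo\<in>Poly_Mapping.keys q. T mo)" unfolding mpoly_eval_def T_def ..
  also have "\<dots> = phi (Poly_Mapping.lookup q 0) + (\<Sum>mo\<in>Poly_Mapping.keys q - {0}. T mo)"
  proof (cases "0 \<in> Poly_Mapping.keys q")
    case True thus ?thesis by (simp add: sum.remove T_def)
  next
    case False
    hence "Poly_Mapping.lookup q 0 = 0" using in_keys_iff by metis
    thus ?thesis using False phi0 by simp
  qed
  finally have "mpoly_eval phi x q - phi (Poly_Mapping.lookup q 0) = (\<Sum>mo\<in>Poly_Mapping.keys q - {0}. T mo)"
    by simp
  moreover have "(\<Sum>mo\<in>Poly_Mapping.keys q - {0}. T mo) \<in> Y" using TY by (intro Ysum) auto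
  ultimately show ?thesis unfolding Y_def by auto
qed

lemma tele:
  fixes f :: "int \<Rightarrow> int"
  assumes "f (-1) = 0"
  shows "(\<Sum>p=0..N. (-1) ^ (p + 1) * (f (int p - 1) + f (int p))) = (-1) ^ (N + 1) * f (int N)"
proof (induction N)
  case 0 thus ?case using assms by simp
next
  case (Suc N)
  have "(\<Sum>p=0..Suc N. (-1) ^ (p + 1) * (f (int p - 1) + f (int p)))
     = (-1) ^ (N + 1) * f (int N) + (-1) ^ (N + 2) * (f (int N) + f (int (Suc N)))"
    using Suc by simp
  also have "\<dots> = (-1) ^ (Suc N + 1) * f (int (Suc N))" by (simp add: algebra_simps)
  finally show ?case .
qed

context module
begin

lemma hdim_zero:
  assumes ah: "alg_hom phi" and p: "p < 0 \<or> p > int n"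
  shows "kos_hdim phi scale y n p = 0"
proof -
  have ch0: "c = 0" if "c \<in> kos_chains n p" for c :: "nat set \<Rightarrow> 'b"
  proof (rule ext)
    fix I show "c I = 0 I"
    proof (rule ccontr)
      assume "c I \<noteq> 0 I"
      hence "I \<subseteq> {..<n}" "int (card I) = p" using chD[OF that] by auto
      moreover have "card I \<le> n" using calculation(1) card_mono[of "{..<n}" I] by simp
      ultimately show False using p by linarith
    qed
  qed
  have "kos_cycles scale y n p \<subseteq> kos_boundaries scale y n p"
  proof
    fix c assume "c \<in> kos_cycles scale y n p"
    hence "c = 0" using ch0 by (auto simp: cyc_iff)
    moreover have "0 \<in> kos_boundaries scale y n p" unfolding kos_boundaries_def
      by (rule image_eqI[where x=0]) (simp_all add: kd_zero ch_zero)
    ultimately show "c \<in> kos_boundaries scale y n p" by simp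
  qed
  thus ?thesis unfolding hdim_rm by (rule vector_space.qdim_zero[OF vs[OF ah]])
qed

end


theorem proposition2p5:
  fixes phi :: "'k::field \<Rightarrow> 'r::comm_ring_1"
    and act :: "'r \<Rightarrow> 'm::ab_group_add \<Rightarrow> 'm"
    and x y :: "nat \<Rightarrow> 'r" and n m :: nat
    and q :: "(nat \<Rightarrow>\<^sub>0 nat) \<Rightarrow>\<^sub>0 'k" and lam :: 'k
  assumes "alg_hom phi"
    and "module act"
    and "\<forall>i<m. y i \<in> k_subalg phi x n"
    and "ideal_gen (k_subalg phi x n) y m = ideal_gen (k_subalg phi x n) x n"
    and "mpoly_vars_in n q"
    and "(\<lambda>i. if i = m then lam else 0)
           \<in> taylor_spectrum phi act (\<lambda>i. if i < m then y i else if i = m then mpoly_eval phi x q else 0) (m + 1)"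
  shows "(\<lambda>_. 0) \<in> taylor_spectrum phi act y m \<and> lam = Poly_Mapping.lookup q 0
    \<and> (\<forall>p::int. kos_hdim phi act
           (tuple_sub phi (\<lambda>i. if i < m then y i else if i = m then mpoly_eval phi x q else 0)
                          (\<lambda>i. if i = m then lam else 0)) (m + 1) p
         = kos_hdim phi act y m (p - 1) + kos_hdim phi act y m p)
    \<and> (kos_index_finite phi act y m \<longrightarrow>
         kos_index_finite phi act
           (tuple_sub phi (\<lambda>i. if i < m then y i else if i = m then mpoly_eval phi x q else 0)
                          (\<lambda>i. if i = m then lam else 0)) (m + 1)
       \<and> kos_index phi act
           (tuple_sub phi (\<lambda>i. if i < m then y i else if i = m then mpoly_eval phi x q else 0)
                          (\<lambda>i. if i = m then lam else 0)) (m + 1) = 0)"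
proof -
  interpret module act by (rule assms(2))
  have ah: "alg_hom phi" by (rule assms(1))
  have phi0: "phi 0 = 0" by (rule alg_hom_0[OF ah])
  have phiadd: "phi (a + b) = phi a + phi b" for a b using ah by (simp add: alg_hom_def)
  have phimul: "phi (a * b) = phi a * phi b" for a b using ah by (simp add: alg_hom_def)
  have phi1: "phi 1 = 1" using ah by (simp add: alg_hom_def)
  have phidiff: "phi (a - b) = phi a - phi b" for a b
    using phiadd[of "a - b" b] by (simp add: algebra_simps)
  define z where "z = (\<lambda>i. if i < m then y i else if i = m then mpoly_eval phi x q else 0)"
  define bb where "bb = (\<lambda>i. if i = m then lam else (0::'k))"
  define Z where "Z = tuple_sub phi z bb"
  have geq: "tuple_sub phi (\<lambda>i. if i < m then y i else if i = m then mpoly_eval phi x q else 0)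
                          (\<lambda>i. if i = m then lam else 0) = Z"
    by (simp add: Z_def z_def bb_def)
  obtain r where r: "mpoly_eval phi x q - phi (Poly_Mapping.lookup q 0) = (\<Sum>j<m. r j * y j)"
    using poly_part[OF ah assms(4) assms(5)] by blast
  have Zy: "\<And>i. i < m \<Longrightarrow> Z i = y i" by (simp add: Z_def tuple_sub_def z_def bb_def phi0)
  define u where "u = phi (Poly_Mapping.lookup q 0) - phi lam"
  have Zm: "Z m = u + (\<Sum>j<m. r j * y j)"
    using r by (simp add: Z_def tuple_sub_def z_def bb_def u_def algebra_simps)
  have nex: "\<not> kos_exact act Z (Suc m)"
    using assms(6) unfolding taylor_spectrum_def Z_def z_def bb_def by simp
  have lam: "lam = Poly_Mapping.lookup q 0"
  proof (rule ccontr)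
    assume ne: "lam \<noteq> Poly_Mapping.lookup q 0"
    define d where "d = Poly_Mapping.lookup q 0 - lam"
    have d: "d \<noteq> 0" using ne by (simp add: d_def)
    have "u = phi d" by (simp add: u_def d_def phidiff)
    hence "u * phi (inverse d) = 1" using d by (simp add: phimul[symmetric] phi1)
    note eu = exact_unit[OF Zy Zm this]
    hence "kos_exact act Z (Suc m)" by simp
    thus False using nex by simp
  qed
  have Zm0: "Z m = 0 + (\<Sum>j<m. r j * y j)" using Zm lam by (simp add: u_def)
  have P1: "(\<lambda>_. 0) \<in> taylor_spectrum phi act y m"
  proof -
    have ty: "tuple_sub phi y (\<lambda>_. 0) = y" by (rule ext) (simp add: tuple_sub_def phi0)
    have "\<not> kos_exact act y m"
    proof
      assume "kos_exact act y m"
      note et = exact_transfer[OF Zy Zm0 this]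
      hence "kos_exact act Z (Suc m)" by simp
      thus False using nex by simp
    qed
    thus ?thesis unfolding taylor_spectrum_def by (simp add: ty)
  qed
  have P3: "kos_hdim phi act Z (m + 1) p = kos_hdim phi act y m (p - 1) + kos_hdim phi act y m p" for p
    using hdim_split[OF ah Zy Zm0, of p] by (simp add: add.commute)
  have P4: "kos_index_finite phi act y m \<longrightarrow> kos_index_finite phi act Z (m + 1) \<and> kos_index phi act Z (m + 1) = 0"
  proof
    assume fin: "kos_index_finite phi act y m"
    have hf: "kos_hdim phi act y m p \<noteq> \<infinity>" for p
    proof (cases "p < 0 \<or> p > int m")
      case True thus ?thesis using hdim_zero[OF ah True] by simp
    next
      case False
      hence "p = int (nat p)" "nat p \<le> m" by auto
      thus ?thesis using fin unfolding kos_index_finite_def by metis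
    qed
    show "kos_index_finite phi act Z (m + 1) \<and> kos_index phi act Z (m + 1) = 0"
    proof
      show "kos_index_finite phi act Z (m + 1)"
        unfolding kos_index_finite_def P3 using hf by (simp only: plus_eq_infty_iff_enat) blast
      define f where "f p = int (the_enat (kos_hdim phi act y m p))" for p
      have fm1: "f (-1) = 0" unfolding f_def using hdim_zero[OF ah, of "-1"] by (simp add: zero_enat_def)
      have fM: "f (int (m + 1)) = 0" unfolding f_def using hdim_zero[OF ah, of "int (m + 1)"] by (simp add: zero_enat_def)
      have te: "int (the_enat (kos_hdim phi act y m (p - 1) + kos_hdim phi act y m p)) = f (p - 1) + f p" for p
        using hf[of "p - 1"] hf[of p] unfolding f_def by (auto simp: not_infinity_eq)
      have "kos_index phi act Z (m + 1) = (\<Sum>p=0..m + 1. (-1) ^ (p + 1) * (f (int p - 1) + f (int p)))"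
        unfolding kos_index_def P3 te ..
      also have "\<dots> = 0" using tele[of f, OF fm1, of "m + 1"] fM by simp
      finally show "kos_index phi act Z (m + 1) = 0" .
    qed
  qed
  show ?thesis unfolding geq
    apply (intro conjI allI)
       apply (rule P1)
      apply (rule lam)
     apply (rule P3)
    apply (rule P4)
    done
qed



end
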